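(* There is an algorithm which, given a random forest $F=\{T_1,\dots,T_m\}$ on $X_n$ and an instance $\vec x\in\{0,1\}^n$, computes a majoritary reason for $\vec x$ given $F$ in $O(n\,|F|)$ time.
   Context: A (Boolean) decision tree on $X_n=\{x_1,\dots,x_n\}$ is a binary tree whose internal nodes are labeled by variables of $X_n$ (each variable occurring at most once on any root-to-leaf path) and whose leaves are labeled $0$ or $1$; its value $T(\vec x)$ is the label of the leaf reached by going left (resp. right) at a node labeled $x_i$ when $x_i=0$ (resp. $1$). $\neg T$ is $T$ with leaf labels $0,1$ swapped. A random forest $F=\{T_1,\dots,T_m\}$ has value $F(\vec x)=1$ iff $\frac1m\sum_i T_i(\vec x)>\frac12$, and size $|F|=\sum_i|T_i|$ (number of nodes). A term is a conjunction (set) of literals; $t$ covers $\vec x$ if every literal of $t$ is true under $\vec x$; an implicant of a Boolean function $f$ is a term $t$ with $f(\vec z)=1$ for all $\vec z$ covered by $t$. A majoritary reason for $\vec x$ given $F$ is a term $t$ covering $\vec x$ that is an implicant of at least $\lfloor m/2\rfloor+1$ trees $T_i$ if $F(\vec x)=1$ (resp. of at least $\lfloor m/2\rfloor+1$ trees $\neg T_i$ if $F(\vec x)=0$), and such that for every literal $l\in t$, $t\setminus\{l\}$ does not satisfy this condition. *)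

theory Defs
  imports Main "HOL-Library.Time_Functions"
begin

text \<open>Variables x_1..x_n are represented by indices 0..n-1; an instance is a
bool list of length n (True = 1). Node i l r: go to l if x_i = 0, to r if x_i = 1.\<close>

datatype dtree = Leaf bool | Node nat dtree dtree

fun eval :: "dtree \<Rightarrow> bool list \<Rightarrow> bool" where
  "eval (Leaf c) z = c"
| "eval (Node i l r) z = (if z ! i then eval r z else eval l z)"

fun tsize :: "dtree \<Rightarrow> nat" where
  "tsize (Leaf c) = 1"
| "tsize (Node i l r) = 1 + tsize l + tsize r"

fun neg :: "dtree \<Rightarrow> dtree" where
  "neg (Leaf c) = Leaf (\<not> c)"
| "neg (Node i l r) = Node i (neg l) (neg r)"

text \<open>well-formedness over X_n: labels among x_1..x_n (indices < n), and no
variable repeated on a root-to-leaf path (V = variables already on the path)\<close>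
fun wf_tree :: "nat \<Rightarrow> nat set \<Rightarrow> dtree \<Rightarrow> bool" where
  "wf_tree n V (Leaf c) = True"
| "wf_tree n V (Node i l r) =
     (i < n \<and> i \<notin> V \<and> wf_tree n (insert i V) l \<and> wf_tree n (insert i V) r)"

type_synonym forest = "dtree list"

definition forest_val :: "forest \<Rightarrow> bool list \<Rightarrow> bool" where
  "forest_val F z \<longleftrightarrow> 2 * length (filter (\<lambda>T. eval T z) F) > length F"

definition fsize :: "forest \<Rightarrow> nat" where
  "fsize F = sum_list (map tsize F)"

text \<open>A literal (i, b) stands for x_i if b and for the negation of x_i otherwise.\<close>
type_synonym literal = "nat \<times> bool"

definition covers :: "literal set \<Rightarrow> bool list \<Rightarrow> bool" where
  "covers t z \<longleftrightarrow> (\<forall>(i, b) \<in> t. i < length z \<and> z ! i = b)"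

definition implicant :: "nat \<Rightarrow> literal set \<Rightarrow> dtree \<Rightarrow> bool" where
  "implicant n t T \<longleftrightarrow> (\<forall>z. length z = n \<longrightarrow> covers t z \<longrightarrow> eval T z)"

definition maj_cond :: "nat \<Rightarrow> forest \<Rightarrow> bool list \<Rightarrow> literal set \<Rightarrow> bool" where
  "maj_cond n F x t \<longleftrightarrow>
     (if forest_val F x
      then length (filter (\<lambda>T. implicant n t T) F) \<ge> length F div 2 + 1
      else length (filter (\<lambda>T. implicant n t (neg T)) F) \<ge> length F div 2 + 1)"

definition majoritary_reason :: "nat \<Rightarrow> forest \<Rightarrow> bool list \<Rightarrow> literal set \<Rightarrow> bool" where
  "majoritary_reason n F x t \<longleftrightarrow>
     covers t x \<and> maj_cond n F x t \<and> (\<forall>l \<in> t. \<not> maj_cond n F x (t - {l}))"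

text \<open>Annotated trees: variable, value of that variable in x, and a flag telling
whether the literal on that variable is in the current term.\<close>
datatype atree = ALeaf bool | ANode nat bool bool atree atree

fun annotate :: "bool list \<Rightarrow> dtree \<Rightarrow> atree" where
  "annotate x (Leaf c) = ALeaf c"
| "annotate x (Node i l r) = ANode i (nth x i) True (annotate x l) (annotate x r)"

fun annotate_all :: "bool list \<Rightarrow> dtree list \<Rightarrow> atree list" where
  "annotate_all x [] = []"
| "annotate_all x (T # Ts) = annotate x T # annotate_all x Ts"

fun aeval :: "atree \<Rightarrow> bool" where
  "aeval (ALeaf c) = c"
| "aeval (ANode i v f l r) = (if v then aeval r else aeval l)"

fun count_true :: "atree list \<Rightarrow> nat" where
  "count_true [] = 0"
| "count_true (T # Ts) = (if aeval T then 1 else 0) + count_true Ts"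

fun unflag :: "nat \<Rightarrow> atree \<Rightarrow> atree" where
  "unflag j (ALeaf c) = ALeaf c"
| "unflag j (ANode i v f l r) = ANode i v (f \<and> i \<noteq> j) (unflag j l) (unflag j r)"

fun unflag_all :: "nat \<Rightarrow> atree list \<Rightarrow> atree list" where
  "unflag_all j [] = []"
| "unflag_all j (T # Ts) = unflag j T # unflag_all j Ts"

text \<open>is the current term an implicant of the tree (b = True) / of its negation (b = False)\<close>
fun aimp :: "bool \<Rightarrow> atree \<Rightarrow> bool" where
  "aimp b (ALeaf c) = (c = b)"
| "aimp b (ANode i v f l r) =
     (if f then (if v then aimp b r else aimp b l) else (aimp b l \<and> aimp b r))"

fun count_imp :: "bool \<Rightarrow> atree list \<Rightarrow> nat" where
  "count_imp b [] = 0"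
| "count_imp b (T # Ts) = (if aimp b T then 1 else 0) + count_imp b Ts"

fun greedy :: "bool \<Rightarrow> nat \<Rightarrow> nat \<Rightarrow> bool list \<Rightarrow> atree list \<Rightarrow> literal list \<Rightarrow> literal list" where
  "greedy b k j [] ts acc = acc"
| "greedy b k j (v # vs) ts acc =
     (let ts' = unflag_all j ts in
      if k \<le> count_imp b ts' then greedy b k (Suc j) vs ts' acc
      else greedy b k (Suc j) vs ts ((j, v) # acc))"

definition mreason :: "forest \<Rightarrow> bool list \<Rightarrow> literal list" where
  "mreason F x =
     (let ts = annotate_all x F;
          m = length F;
          b = (m < 2 * count_true ts);
          k = m div 2 + 1
      in greedy b k 0 x ts [])"

text \<open>Step-counting running-time functions T_f for the algorithm, written out by hand
following exactly the translation scheme of HOL-Library.Time_Commands: every call of a user-defined function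
costs 1 plus the cost of the calls in its body; constructors and the predefined
operations (+, div, <, =, not, and, ...) cost 0; list indexing costs T_nth and length
costs T_length, both from HOL-Library.Time_Functions.\<close>

fun T_annotate :: "bool list \<Rightarrow> dtree \<Rightarrow> nat" where
  "T_annotate x (Leaf c) = 1"
| "T_annotate x (Node i l r) = T_nth x i + T_annotate x l + T_annotate x r + 1"

fun T_annotate_all :: "bool list \<Rightarrow> dtree list \<Rightarrow> nat" where
  "T_annotate_all x [] = 1"
| "T_annotate_all x (T # Ts) = T_annotate x T + T_annotate_all x Ts + 1"

fun T_aeval :: "atree \<Rightarrow> nat" where
  "T_aeval (ALeaf c) = 1"
| "T_aeval (ANode i v f l r) = (if v then T_aeval r else T_aeval l) + 1"

fun T_count_true :: "atree list \<Rightarrow> nat" where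
  "T_count_true [] = 1"
| "T_count_true (T # Ts) = T_aeval T + T_count_true Ts + 1"

fun T_unflag :: "nat \<Rightarrow> atree \<Rightarrow> nat" where
  "T_unflag j (ALeaf c) = 1"
| "T_unflag j (ANode i v f l r) = T_unflag j l + T_unflag j r + 1"

fun T_unflag_all :: "nat \<Rightarrow> atree list \<Rightarrow> nat" where
  "T_unflag_all j [] = 1"
| "T_unflag_all j (T # Ts) = T_unflag j T + T_unflag_all j Ts + 1"

fun T_aimp :: "bool \<Rightarrow> atree \<Rightarrow> nat" where
  "T_aimp b (ALeaf c) = 1"
| "T_aimp b (ANode i v f l r) =
     (if f then (if v then T_aimp b r else T_aimp b l) else T_aimp b l + T_aimp b r) + 1"

fun T_count_imp :: "bool \<Rightarrow> atree list \<Rightarrow> nat" where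
  "T_count_imp b [] = 1"
| "T_count_imp b (T # Ts) = T_aimp b T + T_count_imp b Ts + 1"

fun T_greedy :: "bool \<Rightarrow> nat \<Rightarrow> nat \<Rightarrow> bool list \<Rightarrow> atree list \<Rightarrow> literal list \<Rightarrow> nat" where
  "T_greedy b k j [] ts acc = 1"
| "T_greedy b k j (v # vs) ts acc =
     (let ts' = unflag_all j ts in
      T_unflag_all j ts + T_count_imp b ts' +
      (if k \<le> count_imp b ts' then T_greedy b k (Suc j) vs ts' acc
       else T_greedy b k (Suc j) vs ts ((j, v) # acc))) + 1"

definition T_mreason :: "forest \<Rightarrow> bool list \<Rightarrow> nat" where
  "T_mreason F x =
     (let ts = annotate_all x F;
          m = length F;
          b = (m < 2 * count_true ts);
          k = m div 2 + 1
      in T_annotate_all x F + T_length F + T_count_true ts + T_greedy b k 0 x ts []) + 1"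

end

theory Submission
  imports Defs
begin

fun annS :: "bool list \<Rightarrow> nat set \<Rightarrow> dtree \<Rightarrow> atree" where
  "annS x S (Leaf c) = ALeaf c"
| "annS x S (Node i l r) = ANode i (x ! i) (i \<in> S) (annS x S l) (annS x S r)"

lemma annotate_annS: "annotate x T = annS x UNIV T"
  by (induction T) auto

lemma annotate_all_map: "annotate_all x F = map (annS x UNIV) F"
  by (induction F) (auto simp: annotate_annS)

lemma unflag_annS: "unflag j (annS x S T) = annS x (S - {j}) T"
  by (induction T) auto

lemma unflag_all_map: "unflag_all j ts = map (unflag j) ts"
  by (induction ts) auto

lemma count_imp_filter: "count_imp b ts = length (filter (aimp b) ts)"
  by (induction ts) auto

lemma count_true_filter: "count_true ts = length (filter aeval ts)"
  by (induction ts) auto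

lemma aeval_annS: "aeval (annS x S T) = eval T x"
  by (induction T) auto

lemma eval_neg: "eval (neg T) z = (\<not> eval T z)"
  by (induction T) auto

definition trm :: "bool list \<Rightarrow> nat set \<Rightarrow> literal set" where
  "trm x S = {(i, x ! i) | i. i \<in> S \<and> i < length x}"

definition imp :: "nat \<Rightarrow> bool \<Rightarrow> literal set \<Rightarrow> dtree \<Rightarrow> bool" where
  "imp n b t T \<longleftrightarrow> (\<forall>z. length z = n \<longrightarrow> covers t z \<longrightarrow> eval T z = b)"

lemma eval_upd: "wf_tree n V T \<Longrightarrow> i \<in> V \<Longrightarrow> eval T (z[i := c]) = eval T z"
proof (induction T arbitrary: V)
  case (Leaf x)
  then show ?case by simp
next
  case (Node j l r)
  then have "j \<noteq> i" by auto
  then show ?case using Node by auto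
qed

lemma covers_upd:
  assumes "covers (trm x S) z" "i \<notin> S"
  shows "covers (trm x S) (z[i := c])"
proof -
  have "z[i := c] ! a = z ! a" if "a \<in> S" for a using assms(2) that by (metis nth_list_update_neq)
  then show ?thesis using assms unfolding covers_def trm_def by auto
qed

lemma aimp_iff:
  "wf_tree n V T \<Longrightarrow> length x = n \<Longrightarrow> aimp b (annS x S T) = imp n b (trm x S) T"
proof (induction T arbitrary: V)
  case (Leaf c)
  have "covers (trm x S) x" unfolding covers_def trm_def by auto
  then show ?case using Leaf unfolding imp_def by auto
next
  case (Node i l r)
  have wl: "wf_tree n (insert i V) l" and wr: "wf_tree n (insert i V) r" and "i < n"
    using Node.prems by auto
  note IHl = Node.IH(1)[OF wl Node.prems(2)]
  note IHr = Node.IH(2)[OF wr Node.prems(2)]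
  show ?case
  proof (cases "i \<in> S")
    case True
    have zi: "z ! i = x ! i" if "covers (trm x S) z" for z
      using that True \<open>i < n\<close> Node.prems(2) unfolding covers_def trm_def by auto
    show ?thesis
    proof (cases "x ! i")
      case True
      then show ?thesis using \<open>i \<in> S\<close> IHr zi unfolding imp_def by auto
    next
      case False
      then show ?thesis using \<open>i \<in> S\<close> IHl zi unfolding imp_def by auto
    qed
  next
    case False
    have "imp n b (trm x S) (Node i l r) = (imp n b (trm x S) l \<and> imp n b (trm x S) r)"
    proof
      assume H: "imp n b (trm x S) (Node i l r)"
      have "imp n b (trm x S) l"
        unfolding imp_def
      proof (intro allI impI)
        fix z :: "bool list" assume z: "length z = n" "covers (trm x S) z"
        have "eval (Node i l r) (z[i := False]) = b"
          using H covers_upd[OF z(2) False] z(1) unfolding imp_def by auto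
        moreover have "eval (Node i l r) (z[i := False]) = eval l (z[i := False])"
          using \<open>i < n\<close> z(1) by simp
        moreover have "eval l (z[i := False]) = eval l z" using eval_upd[OF wl] by simp
        ultimately show "eval l z = b" by simp
      qed
      moreover have "imp n b (trm x S) r"
        unfolding imp_def
      proof (intro allI impI)
        fix z :: "bool list" assume z: "length z = n" "covers (trm x S) z"
        have "eval (Node i l r) (z[i := True]) = b"
          using H covers_upd[OF z(2) False] z(1) unfolding imp_def by auto
        moreover have "eval (Node i l r) (z[i := True]) = eval r (z[i := True])"
          using \<open>i < n\<close> z(1) by simp
        moreover have "eval r (z[i := True]) = eval r z" using eval_upd[OF wr] by simp
        ultimately show "eval r z = b" by simp
      qed
      ultimately show "imp n b (trm x S) l \<and> imp n b (trm x S) r" ..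
    next
      assume "imp n b (trm x S) l \<and> imp n b (trm x S) r"
      then show "imp n b (trm x S) (Node i l r)" unfolding imp_def by auto
    qed
    then show ?thesis using False IHl IHr by simp
  qed
qed

lemma imp_implicant: "imp n b t T = (if b then implicant n t T else implicant n t (neg T))"
  unfolding imp_def implicant_def by (auto simp: eval_neg)

lemma maj_cond_imp:
  "maj_cond n F x t = (length F div 2 + 1 \<le> length (filter (imp n (forest_val F x) t) F))"
  unfolding maj_cond_def imp_implicant by auto

lemma length_filter_mono:
  "(\<And>y. y \<in> set xs \<Longrightarrow> P y \<Longrightarrow> Q y) \<Longrightarrow> length (filter P xs) \<le> length (filter Q xs)"
  by (induction xs) auto

lemma covers_anti: "covers t' z \<Longrightarrow> t \<subseteq> t' \<Longrightarrow> covers t z"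
  unfolding covers_def by auto

lemma imp_mono: "t \<subseteq> t' \<Longrightarrow> imp n b t T \<Longrightarrow> imp n b t' T"
  unfolding imp_def using covers_anti by blast

lemma maj_cond_mono: "t \<subseteq> t' \<Longrightarrow> maj_cond n F x t \<Longrightarrow> maj_cond n F x t'"
proof -
  assume a: "t \<subseteq> t'" "maj_cond n F x t"
  have "length (filter (imp n (forest_val F x) t) F) \<le> length (filter (imp n (forest_val F x) t') F)"
    by (rule length_filter_mono) (rule imp_mono[OF a(1)])
  then show ?thesis using a(2) unfolding maj_cond_imp by linarith
qed

lemma count_imp_map:
  assumes "\<forall>T \<in> set F. wf_tree n {} T" "length x = n"
  shows "count_imp b (map (annS x S) F) = length (filter (imp n b (trm x S)) F)"
proof -
  have "count_imp b (map (annS x S) F) = length (filter (aimp b \<circ> annS x S) F)"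
    by (simp add: count_imp_filter filter_map)
  also have "filter (aimp b \<circ> annS x S) F = filter (imp n b (trm x S)) F"
    using assms aimp_iff by (intro filter_cong) auto
  finally show ?thesis .
qed

lemma trm_mono: "S \<subseteq> S' \<Longrightarrow> trm x S \<subseteq> trm x S'"
  unfolding trm_def by auto

lemma greedy_inv:
  fixes G :: "nat set \<Rightarrow> bool"
  assumes mono: "\<And>S S'. S \<subseteq> S' \<Longrightarrow> G S \<Longrightarrow> G S'"
    and Gdef: "\<And>S. G S = (k \<le> count_imp b (map (annS x S) F))"
  shows "drop j x = vs \<Longrightarrow> j \<le> length x \<Longrightarrow> A \<subseteq> {..<j} \<Longrightarrow>
    set acc = (\<lambda>i. (i, x ! i)) ` A \<Longrightarrow> G (A \<union> {j..}) \<Longrightarrow>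
    (\<forall>i\<in>A. \<not> G ((A \<union> {j..}) - {i})) \<Longrightarrow> ts = map (annS x (A \<union> {j..})) F \<Longrightarrow>
    \<exists>A'. set (greedy b k j vs ts acc) = (\<lambda>i. (i, x ! i)) ` A' \<and> A' \<subseteq> {..<length x}
       \<and> G (A' \<union> {length x..}) \<and> (\<forall>i\<in>A'. \<not> G ((A' \<union> {length x..}) - {i}))"
proof (induction vs arbitrary: j ts acc A)
  case Nil
  then have "j = length x" by auto
  then show ?case using Nil by auto
next
  case (Cons v vs)
  have jlt: "j < length x" using Cons.prems(1) by (metis drop_all list.distinct(1) not_le)
  have v: "v = x ! j" and vs: "drop (Suc j) x = vs"
    using Cons.prems(1) jlt Cons_nth_drop_Suc[OF jlt] by auto
  have Sj: "(A \<union> {j..}) - {j} = A \<union> {Suc j..}" using Cons.prems(3) by auto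
  have ts': "unflag_all j ts = map (annS x (A \<union> {Suc j..})) F"
    using Cons.prems(7) Sj by (simp add: unflag_all_map unflag_annS)
  show ?case
  proof (cases "k \<le> count_imp b (unflag_all j ts)")
    case True
    then have g: "G (A \<union> {Suc j..})" using ts' Gdef by simp
    have "\<forall>i\<in>A. \<not> G ((A \<union> {Suc j..}) - {i})"
    proof
      fix i assume "i \<in> A"
      then have "\<not> G ((A \<union> {j..}) - {i})" using Cons.prems(6) by auto
      moreover have "(A \<union> {Suc j..}) - {i} \<subseteq> (A \<union> {j..}) - {i}" by auto
      ultimately show "\<not> G ((A \<union> {Suc j..}) - {i})" using mono by blast
    qed
    moreover have "A \<subseteq> {..<Suc j}" using Cons.prems(3) by auto
    ultimately have "\<exists>A'. set (greedy b k (Suc j) vs (unflag_all j ts) acc) = (\<lambda>i. (i, x ! i)) ` A' \<and> A' \<subseteq> {..<length x}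
       \<and> G (A' \<union> {length x..}) \<and> (\<forall>i\<in>A'. \<not> G ((A' \<union> {length x..}) - {i}))"
      using Cons.IH[OF vs _ _ Cons.prems(4) g _ ts'] jlt by auto
    then show ?thesis using True by (simp add: Let_def)
  next
    case False
    then have ng: "\<not> G (A \<union> {Suc j..})" using ts' Gdef by simp
    have eqS: "insert j A \<union> {Suc j..} = A \<union> {j..}" by auto
    have "\<forall>i\<in>insert j A. \<not> G ((insert j A \<union> {Suc j..}) - {i})"
      using Cons.prems(6) ng Sj eqS by auto
    moreover have "insert j A \<subseteq> {..<Suc j}" using Cons.prems(3) by auto
    moreover have "set ((j, v) # acc) = (\<lambda>i. (i, x ! i)) ` insert j A"
      using Cons.prems(4) v by auto
    ultimately have "\<exists>A'. set (greedy b k (Suc j) vs ts ((j, v) # acc)) = (\<lambda>i. (i, x ! i)) ` A' \<and> A' \<subseteq> {..<length x}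
       \<and> G (A' \<union> {length x..}) \<and> (\<forall>i\<in>A'. \<not> G ((A' \<union> {length x..}) - {i}))"
      using Cons.IH[OF vs, of "insert j A" "(j, v) # acc" ts] jlt Cons.prems(5,7) eqS by auto
    then show ?thesis using False by (simp add: Let_def)
  qed
qed

lemma correctness:
  assumes len: "length x = n" and wf: "\<forall>T \<in> set F. wf_tree n {} T"
    and ex: "\<exists>t. majoritary_reason n F x t"
  shows "majoritary_reason n F x (set (mreason F x))"
proof -
  define b where "b = forest_val F x"
  define k where "k = length F div 2 + 1"
  define G where "G S = (k \<le> count_imp b (map (annS x S) F))" for S
  have GM: "G S = maj_cond n F x (trm x S)" for S
    unfolding G_def maj_cond_imp count_imp_map[OF wf len] b_def k_def ..
  have mono: "G S'" if "S \<subseteq> S'" "G S" for S S'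
    using that GM maj_cond_mono trm_mono by metis
  have ct: "count_true (annotate_all x F) = length (filter (\<lambda>T. eval T x) F)"
    by (simp add: annotate_all_map count_true_filter filter_map o_def aeval_annS)
  have mr: "mreason F x = greedy b k 0 x (map (annS x ({} \<union> {0..})) F) []"
    unfolding mreason_def Let_def ct b_def k_def forest_val_def
    by (simp add: annotate_all_map atLeast_0)
  obtain t where t: "majoritary_reason n F x t" using ex by blast
  have "t \<subseteq> trm x UNIV" using t len unfolding majoritary_reason_def covers_def trm_def by auto
  then have "G UNIV" using t GM maj_cond_mono unfolding majoritary_reason_def by blast
  then have G0: "G ({} \<union> {0..})" by (simp add: atLeast_0)
  obtain A' where A': "set (mreason F x) = (\<lambda>i. (i, x ! i)) ` A'" "A' \<subseteq> {..<length x}"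
       "G (A' \<union> {length x..})" "\<forall>i\<in>A'. \<not> G ((A' \<union> {length x..}) - {i})"
  proof -
    have "\<exists>A'. set (greedy b k 0 x (map (annS x ({} \<union> {0..})) F) []) = (\<lambda>i. (i, x ! i)) ` A' \<and> A' \<subseteq> {..<length x}
       \<and> G (A' \<union> {length x..}) \<and> (\<forall>i\<in>A'. \<not> G ((A' \<union> {length x..}) - {i}))"
      by (rule greedy_inv[OF mono G_def]) (use G0 in auto)
    then show ?thesis using that unfolding mr by blast
  qed
  have tr: "trm x (A' \<union> {length x..}) = (\<lambda>i. (i, x ! i)) ` A'"
    using A'(2) unfolding trm_def by auto
  have tr2: "trm x ((A' \<union> {length x..}) - {i}) = (\<lambda>i. (i, x ! i)) ` A' - {(i, x ! i)}" if "i \<in> A'" for i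
    using A'(2) unfolding trm_def by auto
  show ?thesis
    unfolding majoritary_reason_def
  proof (intro conjI ballI)
    show "covers (set (mreason F x)) x" using A' unfolding covers_def by auto
    show "maj_cond n F x (set (mreason F x))" using A'(1,3) GM tr by simp
    fix l assume "l \<in> set (mreason F x)"
    then obtain i where i: "i \<in> A'" "l = (i, x ! i)" using A'(1) by auto
    have "\<not> G ((A' \<union> {length x..}) - {i})" using A'(4) i(1) by blast
    then have "\<not> maj_cond n F x (trm x ((A' \<union> {length x..}) - {i}))" using GM by blast
    then show "\<not> maj_cond n F x (set (mreason F x) - {l})"
      unfolding tr2[OF i(1)] A'(1) i(2) .
  qed
qed


fun asize :: "atree \<Rightarrow> nat" where
  "asize (ALeaf c) = 1"
| "asize (ANode i v f l r) = 1 + asize l + asize r"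

lemma T_unflag_eq: "T_unflag j a = asize a"
  by (induction a) auto

lemma asize_unflag: "asize (unflag j a) = asize a"
  by (induction a) auto

lemma T_aimp_le: "T_aimp b a \<le> asize a"
  by (induction a) auto

lemma T_aeval_le: "T_aeval a \<le> asize a"
  by (induction a) auto

lemma asize_annS: "asize (annS x S T) = tsize T"
  by (induction T) auto

definition W :: "atree list \<Rightarrow> nat" where
  "W ts = sum_list (map asize ts) + length ts + 1"

lemma T_unflag_all_eq: "T_unflag_all j ts = W ts"
  unfolding W_def by (induction ts) (auto simp: T_unflag_eq)

lemma W_unflag_all: "W (unflag_all j ts) = W ts"
  unfolding W_def by (induction ts) (auto simp: asize_unflag)

lemma T_count_imp_le: "T_count_imp b ts \<le> W ts"
  unfolding W_def
  apply (induction ts)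
   apply simp
  subgoal for a ts using T_aimp_le[of b a] by simp
  done

lemma T_count_true_le: "T_count_true ts \<le> W ts"
  unfolding W_def
  apply (induction ts)
   apply simp
  subgoal for a ts using T_aeval_le[of a] by simp
  done

lemma W_pos: "1 \<le> W ts" unfolding W_def by simp

lemma T_greedy_le: "T_greedy b k j vs ts acc \<le> (length vs + 1) * (3 * W ts)"
proof (induction vs arbitrary: j ts acc)
  case Nil
  then show ?case using W_pos[of ts] by simp
next
  case (Cons v vs)
  let ?ts' = "unflag_all j ts"
  have r: "(if k \<le> count_imp b ?ts' then T_greedy b k (Suc j) vs ?ts' acc
       else T_greedy b k (Suc j) vs ts ((j, v) # acc)) \<le> (length vs + 1) * (3 * W ts)"
    using Cons.IH[of "Suc j" ?ts' acc] Cons.IH[of "Suc j" ts "(j, v) # acc"] W_unflag_all[of j ts]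
    by auto
  have "T_greedy b k j (v # vs) ts acc = W ts + T_count_imp b ?ts' +
      (if k \<le> count_imp b ?ts' then T_greedy b k (Suc j) vs ?ts' acc
       else T_greedy b k (Suc j) vs ts ((j, v) # acc)) + 1"
    by (simp add: Let_def T_unflag_all_eq)
  also have "\<dots> \<le> W ts + W ts + (length vs + 1) * (3 * W ts) + 1"
    using r T_count_imp_le[of b ?ts'] W_unflag_all[of j ts] by linarith
  also have "\<dots> \<le> (length (v # vs) + 1) * (3 * W ts)"
    using W_pos[of ts] by simp
  finally show ?case .
qed

lemma T_annotate_le: "wf_tree n V T \<Longrightarrow> length x = n \<Longrightarrow> T_annotate x T \<le> (n + 1) * tsize T"
proof (induction T arbitrary: V)
  case (Leaf c)
  then show ?case by simp
next
  case (Node i l r)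
  then have "T_nth x i = i + 1" "i < n" by (auto simp: T_nth)
  moreover have "T_annotate x l \<le> (n + 1) * tsize l" "T_annotate x r \<le> (n + 1) * tsize r"
    using Node by auto
  ultimately show ?case by (simp add: algebra_simps)
qed

lemma T_annotate_all_le:
  "\<forall>T \<in> set F. wf_tree n {} T \<Longrightarrow> length x = n \<Longrightarrow>
   T_annotate_all x F \<le> (n + 1) * fsize F + length F + 1"
proof (induction F)
  case Nil
  then show ?case by simp
next
  case (Cons T F)
  then have "T_annotate x T \<le> (n + 1) * tsize T" using T_annotate_le by auto
  then show ?case using Cons by (simp add: fsize_def algebra_simps)
qed

lemma len_le_fsize: "length F \<le> fsize F"
  unfolding fsize_def
proof (induction F)
  case (Cons T F)
  have "1 \<le> tsize T" by (cases T) auto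
  then show ?case using Cons by simp
qed simp

lemma W_ann: "W (annotate_all x F) = fsize F + length F + 1"
  unfolding W_def fsize_def annotate_all_map by (simp add: o_def asize_annS)

lemma time_bound:
  assumes len: "length x = n" and ne: "F \<noteq> []" and wf: "\<forall>T \<in> set F. wf_tree n {} T"
  shows "T_mreason F x \<le> 20 * ((n + 1) * fsize F)"
proof -
  define s where "s = fsize F"
  define m where "m = length F"
  define P where "P = (n + 1) * s"
  have ms: "m \<le> s" using len_le_fsize unfolding m_def s_def .
  have m1: "1 \<le> m" using ne unfolding m_def by (cases F) auto
  have sP: "s \<le> P" unfolding P_def by simp
  have Wv: "W (annotate_all x F) = s + m + 1" using W_ann unfolding s_def m_def .
  have g: "T_greedy b k 0 x (annotate_all x F) [] \<le> (n + 1) * (3 * (s + m + 1))" for b k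
    using T_greedy_le[of b k 0 x "annotate_all x F" "[]"] Wv len by simp
  have "3 * (s + m + 1) \<le> 9 * s" using ms m1 by presburger
  then have "(n + 1) * (3 * (s + m + 1)) \<le> (n + 1) * (9 * s)"
    by (rule mult_le_mono2)
  then have g': "(n + 1) * (3 * (s + m + 1)) \<le> 9 * P" unfolding P_def by simp
  have a: "T_annotate_all x F \<le> P + m + 1"
    using T_annotate_all_le[OF wf len] unfolding P_def s_def m_def .
  have c: "T_count_true (annotate_all x F) \<le> s + m + 1"
    using T_count_true_le[of "annotate_all x F"] Wv by simp
  have "T_mreason F x \<le> (P + m + 1) + (m + 1) + (s + m + 1) + 9 * P + 1"
    unfolding T_mreason_def Let_def T_length
    using a c g[of "length F < 2 * count_true (annotate_all x F)" "length F div 2 + 1"] g'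
    unfolding m_def by linarith
  also have "\<dots> \<le> 20 * P" using ms m1 sP by linarith
  finally show ?thesis unfolding P_def s_def .
qed

theorem mainTheorem7:
  shows "\<exists>c::nat. \<forall>n (F::forest) (x::bool list).
           length x = n \<and> F \<noteq> [] \<and> (\<forall>T \<in> set F. wf_tree n {} T)
           \<and> (\<exists>t. majoritary_reason n F x t)
           \<longrightarrow> majoritary_reason n F x (set (mreason F x))
             \<and> T_mreason F x \<le> c * ((n + 1) * fsize F)"
  using correctness time_bound by blast

end
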